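(* Let $K=(V,E)$ be a complete graph, $r:V\to\mathbb{Z}_+$ and $F\subseteq V$. Fix an ordering of $F$ by non-increasing $r$-value and an ordering of $V\setminus F$ by non-increasing $r$-value. Then there exist $k\in\{0,\dots,|F|\}$ and $\ell\in\{0,\dots,|V|-|F|\}$ such that the union of the first $k$ vertices of $F$ and the first $\ell$ vertices of $V\setminus F$ (in these orderings) is a minimum-size vector connectivity set for $(K,F,r)$.
   Context: For a vertex $v$ and a set $U\subseteq V$, a $v$--$U$ fan of order $k$ is a collection of $k$ paths, each connecting $v$ to a vertex of $U$, pairwise vertex-disjoint except at $v$ (if $v\in U$, the trivial one-vertex path $(v)$ may be one of them); $v$ is $k$-linked to $U$ if such a fan exists. A vector connectivity set for $(K,F,r)$ is a set $S\subseteq V$ such that every $v\in V\setminus S$ is $r(v)$-linked to $S\cup F$. *)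

theory Defs
  imports Main
begin

definition is_path :: "'a set \<Rightarrow> ('a \<Rightarrow> 'a \<Rightarrow> bool) \<Rightarrow> 'a list \<Rightarrow> bool" where
  "is_path V E p \<longleftrightarrow> p \<noteq> [] \<and> distinct p \<and> set p \<subseteq> V \<and>
     (\<forall>i. Suc i < length p \<longrightarrow> E (p ! i) (p ! Suc i))"

definition complete_adj :: "'a \<Rightarrow> 'a \<Rightarrow> bool" where
  "complete_adj u w \<longleftrightarrow> u \<noteq> w"

text \<open>A v--U fan of order k: a set of k paths, each starting at v and ending in U,
  pairwise vertex-disjoint except at v (the trivial path [v] is allowed when v is in U).\<close>

definition is_fan :: "'a set \<Rightarrow> ('a \<Rightarrow> 'a \<Rightarrow> bool) \<Rightarrow> 'a \<Rightarrow> 'a set \<Rightarrow> 'a list set \<Rightarrow> nat \<Rightarrow> bool" where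
  "is_fan V E v U P k \<longleftrightarrow> finite P \<and> card P = k \<and>
     (\<forall>p\<in>P. is_path V E p \<and> hd p = v \<and> last p \<in> U) \<and>
     (\<forall>p\<in>P. \<forall>q\<in>P. p \<noteq> q \<longrightarrow> set p \<inter> set q \<subseteq> {v})"

definition k_linked :: "'a set \<Rightarrow> ('a \<Rightarrow> 'a \<Rightarrow> bool) \<Rightarrow> 'a \<Rightarrow> nat \<Rightarrow> 'a set \<Rightarrow> bool" where
  "k_linked V E v k U \<longleftrightarrow> (\<exists>P. is_fan V E v U P k)"

definition is_vc_set :: "'a set \<Rightarrow> ('a \<Rightarrow> 'a \<Rightarrow> bool) \<Rightarrow> 'a set \<Rightarrow> ('a \<Rightarrow> nat) \<Rightarrow> 'a set \<Rightarrow> bool" where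
  "is_vc_set V E F r S \<longleftrightarrow> S \<subseteq> V \<and>
     (\<forall>v\<in>V - S. k_linked V E v (r v) (S \<union> F))"

definition is_min_vc_set :: "'a set \<Rightarrow> ('a \<Rightarrow> 'a \<Rightarrow> bool) \<Rightarrow> 'a set \<Rightarrow> ('a \<Rightarrow> nat) \<Rightarrow> 'a set \<Rightarrow> bool" where
  "is_min_vc_set V E F r S \<longleftrightarrow> is_vc_set V E F r S \<and>
     (\<forall>S'. is_vc_set V E F r S' \<longrightarrow> card S \<le> card S')"

end

theory Submission
  imports Defs
begin

lemma distinct_hd_last: "p \<noteq> [] \<Longrightarrow> distinct p \<Longrightarrow> hd p = last p \<Longrightarrow> p = [hd p]"
  by (cases p) (auto split: if_splits)

lemma fan_upper:
  assumes "is_fan V E v U P k" "finite U"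
  shows "k \<le> card U"
proof -
  have P: "finite P" "card P = k" "\<forall>p\<in>P. is_path V E p \<and> hd p = v \<and> last p \<in> U"
    "\<forall>p\<in>P. \<forall>q\<in>P. p \<noteq> q \<longrightarrow> set p \<inter> set q \<subseteq> {v}"
    using assms(1) unfolding is_fan_def by auto
  have "inj_on last P"
  proof (rule inj_onI, rule ccontr)
    fix p q assume pq: "p \<in> P" "q \<in> P" "last p = last q" "p \<noteq> q"
    have pp: "is_path V E p" "hd p = v" "is_path V E q" "hd q = v" using P pq by auto
    have "last p \<in> set p" "last q \<in> set q" using pp unfolding is_path_def by auto
    hence "last p = v" using P(4) pq by auto
    hence "p = [v]" "q = [v]" using distinct_hd_last[of p] distinct_hd_last[of q] pp pq(3)
      unfolding is_path_def by auto
    thus False using pq by simp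
  qed
  moreover have "last ` P \<subseteq> U" using P by auto
  ultimately have "card P \<le> card U" using card_inj_on_le assms(2) by blast
  thus ?thesis using P by simp
qed

lemma fan_lower:
  assumes "finite V" "v \<in> V" "U \<subseteq> V" "k \<le> card U"
  shows "k_linked V complete_adj v k U"
proof -
  obtain W where W: "W \<subseteq> U" "card W = k" using obtain_subset_with_card_n[OF assms(4)] by blast
  define f where "f = (\<lambda>u. if u = v then [v] else [v,u])"
  have fin: "finite W" using W assms finite_subset by blast
  have inj: "inj_on f W" unfolding f_def by (rule inj_onI) (auto split: if_splits)
  have "is_fan V complete_adj v U (f ` W) k"
    unfolding is_fan_def
  proof (intro conjI)
    show "finite (f ` W)" using fin by simp
    show "card (f ` W) = k" using card_image[OF inj] W by simp
  next
    show "\<forall>p\<in>f ` W. is_path V complete_adj p \<and> hd p = v \<and> last p \<in> U"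
    proof
    fix p assume "p \<in> f ` W"
    then obtain u where u: "u \<in> W" "p = f u" by blast
    show "is_path V complete_adj p \<and> hd p = v \<and> last p \<in> U"
    proof (cases "u = v")
      case True
      thus ?thesis using u W assms unfolding f_def is_path_def by auto
    next
      case False
      have "\<forall>i. Suc i < length [v,u] \<longrightarrow> complete_adj ([v,u] ! i) ([v,u] ! Suc i)"
        using False unfolding complete_adj_def by (auto simp: less_Suc_eq)
      thus ?thesis using u W assms False unfolding f_def is_path_def by auto
    qed
    qed
  next
    show "\<forall>p\<in>f ` W. \<forall>q\<in>f ` W. p \<noteq> q \<longrightarrow> set p \<inter> set q \<subseteq> {v}"
    proof (intro ballI impI)
    fix p q assume "p \<in> f ` W" "q \<in> f ` W" "p \<noteq> q"
    thus "set p \<inter> set q \<subseteq> {v}" unfolding f_def by (auto split: if_splits)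
    qed
  qed
  thus ?thesis unfolding k_linked_def by blast
qed

lemma vc_char:
  assumes "finite V" "F \<subseteq> V"
  shows "is_vc_set V complete_adj F r S \<longleftrightarrow> S \<subseteq> V \<and> (\<forall>v\<in>V - S. r v \<le> card (S \<union> F))"
proof
  assume h: "is_vc_set V complete_adj F r S"
  hence S: "S \<subseteq> V" unfolding is_vc_set_def by auto
  hence fin: "finite (S \<union> F)" using assms finite_subset by blast
  show "S \<subseteq> V \<and> (\<forall>v\<in>V - S. r v \<le> card (S \<union> F))"
    using h S fan_upper[OF _ fin] unfolding is_vc_set_def k_linked_def by blast
next
  assume h: "S \<subseteq> V \<and> (\<forall>v\<in>V - S. r v \<le> card (S \<union> F))"
  show "is_vc_set V complete_adj F r S"
    unfolding is_vc_set_def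
  proof (intro conjI ballI)
    show "S \<subseteq> V" using h by simp
    fix v assume v: "v \<in> V - S"
    have "S \<union> F \<subseteq> V" using h assms(2) by simp
    thus "k_linked V complete_adj v (r v) (S \<union> F)"
      using fan_lower[OF assms(1)] v h by simp
  qed
qed

lemma prefix_bound:
  assumes "distinct ys" "sorted_wrt (\<lambda>a b. r a \<ge> r b) ys" "A \<subseteq> set ys" "card A = a"
    and B: "\<forall>v\<in>set ys - A. r v \<le> (B::nat)"
  shows "\<forall>v\<in>set ys - set (take a ys). r v \<le> B"
proof
  fix v assume v: "v \<in> set ys - set (take a ys)"
  then obtain j where j: "j < length ys" "ys ! j = v" by (auto simp: in_set_conv_nth)
  have ja: "j \<ge> a"
  proof (rule ccontr)
    assume "\<not> a \<le> j"
    hence "v \<in> set (take a ys)" using j by (auto simp: in_set_conv_nth intro!: exI[of _ j])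
    thus False using v by simp
  qed
  have "\<exists>i\<in>{0..a}. ys ! i \<notin> A"
  proof (rule ccontr)
    assume "\<not> ?thesis"
    hence sub: "(\<lambda>i. ys ! i) ` {0..a} \<subseteq> A" by auto
    have "inj_on (\<lambda>i. ys ! i) {0..a}" using assms(1) ja j
      by (auto intro!: inj_onI simp: nth_eq_iff_index_eq)
    hence "card ((\<lambda>i. ys ! i) ` {0..a}) = a + 1" by (simp add: card_image)
    moreover have "finite A" using assms(3) finite_subset by blast
    ultimately have "a + 1 \<le> card A" using sub card_mono by metis
    thus False using assms(4) by simp
  qed
  then obtain i where i: "i \<le> a" "ys ! i \<notin> A" by auto
  have "ys ! i \<in> set ys" using i ja j by auto
  hence ri: "r (ys ! i) \<le> B" using B i by auto
  have "r (ys ! j) \<le> r (ys ! i)"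
  proof (cases "i = j")
    case False
    hence "i < j" using i ja by simp
    thus ?thesis using sorted_wrt_nth_less[OF assms(2)] j by blast
  qed simp
  thus "r v \<le> B" using ri j by simp
qed

theorem mainTheorem9:
  fixes V F :: "'a set" and r :: "'a \<Rightarrow> nat" and fs xs :: "'a list"
  assumes "finite V" and "F \<subseteq> V"
    and "distinct fs" and "set fs = F" and "sorted_wrt (\<lambda>a b. r a \<ge> r b) fs"
    and "distinct xs" and "set xs = V - F" and "sorted_wrt (\<lambda>a b. r a \<ge> r b) xs"
  shows "\<exists>k \<le> card F. \<exists>l \<le> card V - card F.
           is_min_vc_set V complete_adj F r (set (take k fs) \<union> set (take l xs))"
proof -
  let ?vc = "is_vc_set V complete_adj F r"
  define n where "n = (LEAST n. \<exists>S. ?vc S \<and> card S = n)"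
  have ex: "\<exists>n S. ?vc S \<and> card S = n"
    by (rule exI[of _ "card V"], rule exI[of _ V]) (auto simp: vc_char[OF assms(1,2)])
  obtain S where S: "?vc S" "card S = n" using LeastI_ex[OF ex] unfolding n_def by blast
  have minS: "\<forall>S'. ?vc S' \<longrightarrow> card S \<le> card S'"
    using S(2) Least_le n_def by (metis (mono_tags, lifting))
  have SV: "S \<subseteq> V" and Sb: "\<forall>v\<in>V - S. r v \<le> card (S \<union> F)"
    using S(1) vc_char[OF assms(1,2)] by auto
  have finS: "finite S" using SV assms(1) finite_subset by blast
  have finF: "finite F" using assms(1,2) finite_subset by blast
  define a where "a = card (S \<inter> F)"
  define b where "b = card (S - F)"
  define T where "T = set (take a fs) \<union> set (take b xs)"
  define B where "B = card (S \<union> F)"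
  have aF: "a \<le> card F" unfolding a_def using finF by (simp add: card_mono)
  have cVF: "card V - card F = card (V - F)" using assms(1,2) by (simp add: card_Diff_subset finF)
  have bF: "b \<le> card V - card F" unfolding b_def cVF
    using SV assms(1) by (intro card_mono) auto
  have lfs: "length fs = card F" using assms(3,4) distinct_card by fastforce
  have lxs: "length xs = card (V - F)" using assms(6,7) distinct_card by fastforce
  have cta: "card (set (take a fs)) = a"
    using distinct_card[OF distinct_take[OF assms(3)]] aF lfs by simp
  have ctb: "card (set (take b xs)) = b"
    using distinct_card[OF distinct_take[OF assms(6)]] bF lxs cVF by simp
  have tF: "set (take a fs) \<subseteq> F" using assms(4) set_take_subset[of a fs] by simp
  have tX: "set (take b xs) \<subseteq> V - F" using assms(7) set_take_subset[of b xs] by simp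
  have cT: "card T = a + b" unfolding T_def
    using card_Un_disjoint[of "set (take a fs)" "set (take b xs)"] tF tX cta ctb by auto
  have cS: "card S = a + b" unfolding a_def b_def
    using card_Un_disjoint[of "S \<inter> F" "S - F"] finS by (metis Int_Diff_Un Int_Diff_disjoint finite_Diff finite_Int)
  have "T \<union> F = F \<union> set (take b xs)" unfolding T_def using tF by auto
  hence cTF: "card (T \<union> F) = card F + b" using card_Un_disjoint[of F "set (take b xs)"] tX finF ctb by auto
  have "S \<union> F = F \<union> (S - F)" by auto
  hence cSF: "card (S \<union> F) = card F + b" unfolding b_def
    using card_Un_disjoint[of F "S - F"] finF finS by auto
  have b1: "\<forall>v\<in>set fs - set (take a fs). r v \<le> B"
    by (rule prefix_bound[OF assms(3,5), of "S \<inter> F"]) (use assms(2,4) Sb in \<open>auto simp: a_def B_def\<close>)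
  have b2: "\<forall>v\<in>set xs - set (take b xs). r v \<le> B"
    by (rule prefix_bound[OF assms(6,8), of "S - F"]) (use assms(2,7) Sb SV in \<open>auto simp: b_def B_def\<close>)
  have "?vc T"
    unfolding vc_char[OF assms(1,2)]
  proof
    show "T \<subseteq> V" using tF tX assms(2) unfolding T_def by auto
    show "\<forall>v\<in>V - T. r v \<le> card (T \<union> F)"
    proof
      fix v assume v: "v \<in> V - T"
      hence "v \<in> set fs - set (take a fs) \<or> v \<in> set xs - set (take b xs)"
        using assms(4,7) unfolding T_def by auto
      thus "r v \<le> card (T \<union> F)" using b1 b2 cTF cSF unfolding B_def by auto
    qed
  qed
  hence "is_min_vc_set V complete_adj F r T"
    unfolding is_min_vc_set_def using minS cS cT by auto
  thus ?thesis using aF bF unfolding T_def by blast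
qed

end
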